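(* Let $m\ge 2$ and consider actions $0,1,\dots,m$ and a random state $S\in\{A,A^c\}$ with $P(S=A)=P(S=A^c)=1/2$. In state $A$, action $0$ has deterministic cost $0$ and each action $j\ge1$ has cost distributed $\mathcal{N}(1,1)$; in state $A^c$, action $0$ has deterministic cost $1$ and each action $j\ge 1$ has cost distributed $\mathcal{N}(0,1)$. Given $S$, the training data consist of $m$ independent cost observations of each action (all independent), and $\hat{\mu}(j)$ denotes the empirical average cost of action $j$. The predicted cost minimization (PCM) rule selects $\arg\min_j\hat{\mu}(j)$; the uncertainty penalized (UP) rule with parameter $\lambda$ selects $\arg\min_j\hat{\mu}(j)+\lambda\sqrt{\sigma_j^2\ln m/m}$, where $\sigma_0^2=0$ and $\sigma_j^2=1$ for $j\ge1$. The regret of a rule is the true expected cost (in the realized state) of the selected action minus the minimal true expected cost in that state, and $\mathbb{E}R^{PCM},\mathbb{E}R^{UP}$ denote expected regrets over the training data and the state. If $\lambda\ge\sqrt{2}$, then $\mathbb{E}R^{UP}/\mathbb{E}R^{PCM}\to0$ as $m\to\infty$, i.e. $\mathbb{E}R^{UP}=o(\mathbb{E}R^{PCM})$.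
   Context: Ties in the argmin occur with probability zero and may be broken arbitrarily. The true expected cost of action $j\ge1$ is $1$ in state $A$ and $0$ in state $A^c$; that of action $0$ is $0$ in state $A$ and $1$ in state $A^c$. *)

theory Defs
  imports "HOL-Probability.Probability"
begin

datatype state = StA | StAc

definition true_cost :: "state \<Rightarrow> nat \<Rightarrow> real" where
  "true_cost s j = (case s of StA \<Rightarrow> (if j = 0 then 0 else 1)
                            | StAc \<Rightarrow> (if j = 0 then 1 else 0))"

definition gauss_mean :: "state \<Rightarrow> real" where
  "gauss_mean s = (case s of StA \<Rightarrow> 1 | StAc \<Rightarrow> 0)"

text \<open>Training data given the state: observation X (j,i) is the i-th cost observation
  (i = 1..m) of action j (j = 1..m), all independent N(gauss_mean s, 1).
  Action 0 has deterministic cost, so its observations are not random.\<close>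
definition data_dist :: "nat \<Rightarrow> state \<Rightarrow> (nat \<times> nat \<Rightarrow> real) measure" where
  "data_dist m s = PiM ({1..m} \<times> {1..m}) (\<lambda>_. density lborel (normal_density (gauss_mean s) 1))"

definition emp_mean :: "nat \<Rightarrow> state \<Rightarrow> (nat \<times> nat \<Rightarrow> real) \<Rightarrow> nat \<Rightarrow> real" where
  "emp_mean m s X j = (if j = 0 then true_cost s 0 else (\<Sum>i\<in>{1..m}. X (j, i)) / real m)"

definition sigma2 :: "nat \<Rightarrow> real" where
  "sigma2 j = (if j = 0 then 0 else 1)"

text \<open>Argmin over actions 0..m; ties (a null event) broken towards the smallest index.\<close>
definition argmin_act :: "nat \<Rightarrow> (nat \<Rightarrow> real) \<Rightarrow> nat" where
  "argmin_act m f = (LEAST j. j \<le> m \<and> (\<forall>k\<le>m. f j \<le> f k))"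

definition sel_PCM :: "nat \<Rightarrow> state \<Rightarrow> (nat \<times> nat \<Rightarrow> real) \<Rightarrow> nat" where
  "sel_PCM m s X = argmin_act m (emp_mean m s X)"

definition sel_UP :: "real \<Rightarrow> nat \<Rightarrow> state \<Rightarrow> (nat \<times> nat \<Rightarrow> real) \<Rightarrow> nat" where
  "sel_UP lam m s X =
     argmin_act m (\<lambda>j. emp_mean m s X j + lam * sqrt (sigma2 j * ln (real m) / real m))"

definition regret :: "nat \<Rightarrow> state \<Rightarrow> nat \<Rightarrow> real" where
  "regret m s j = true_cost s j - Min (true_cost s ` {0..m})"

definition exp_regret :: "nat \<Rightarrow> (state \<Rightarrow> (nat \<times> nat \<Rightarrow> real) \<Rightarrow> nat) \<Rightarrow> real" where
  "exp_regret m sel =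
     (1/2) * (\<integral>X. regret m StA (sel StA X) \<partial>data_dist m StA)
   + (1/2) * (\<integral>X. regret m StAc (sel StAc X) \<partial>data_dist m StAc)"

definition ER_PCM :: "nat \<Rightarrow> real" where
  "ER_PCM m = exp_regret m (sel_PCM m)"

definition ER_UP :: "real \<Rightarrow> nat \<Rightarrow> real" where
  "ER_UP lam m = exp_regret m (sel_UP lam m)"

end

theory Submission
  imports Defs "HOL-Real_Asymp.Real_Asymp"
begin

lemma indep_coords:
  fixes K J :: "'i set" and N :: "real measure"
  assumes K: "finite K" and JK: "J \<subseteq> K" and J: "J \<noteq> {}"
    and N: "prob_space N" and sN: "sets N = sets borel"
  shows "prob_space.indep_vars (PiM K (\<lambda>_. N)) (\<lambda>_. borel) (\<lambda>p X. X p) J"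
proof -
  interpret P: product_prob_space "\<lambda>_. N" K
    by (simp add: N product_prob_space_def product_sigma_finite_def prob_space_imp_sigma_finite
      product_prob_space_axioms_def)
  have ps: "prob_space (PiM K (\<lambda>_. N))" by (rule prob_space_PiM) (simp add: N)
  have sp: "space N = UNIV" using sets_eq_imp_space_eq[OF sN] by simp
  have rv: "(\<lambda>X::'i\<Rightarrow>real. X p) \<in> measurable (PiM K (\<lambda>_. N)) borel" if "p \<in> J" for p
  proof -
    have "(\<lambda>X::'i\<Rightarrow>real. X p) \<in> measurable (PiM K (\<lambda>_. N)) N"
      using that JK by (intro measurable_component_singleton) auto
    then show ?thesis by (subst (asm) measurable_cong_sets[OF refl sN]) (simp add: sets_eq_imp_space_eq)
  qed
  have d1: "distr (PiM K (\<lambda>_. N)) borel (\<lambda>X. X p) = N" if "p \<in> J" for p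
  proof -
    have "distr (PiM K (\<lambda>_. N)) borel (\<lambda>X. X p) = distr (PiM K (\<lambda>_. N)) N (\<lambda>X. X p)"
      unfolding distr_def using sN sets_eq_imp_space_eq[OF sN] by simp
    also have "\<dots> = N" using that JK by (intro P.PiM_component) auto
    finally show ?thesis .
  qed
  have "distr (PiM K (\<lambda>_. N)) (PiM J (\<lambda>_. borel)) (\<lambda>X. \<lambda>p\<in>J. X p) =
        distr (PiM K (\<lambda>_. N)) (PiM J (\<lambda>_. N)) (\<lambda>X. restrict X J)"
    unfolding distr_def
    using sets_PiM_cong[of J J "\<lambda>_. N" "\<lambda>_. borel"] sN
      sets_eq_imp_space_eq[OF sets_PiM_cong[of J J "\<lambda>_. N" "\<lambda>_. borel"]]
    by (simp add: restrict_def)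
  also have "\<dots> = PiM J (\<lambda>_. N)"
    using P.distr_restrict[OF JK K] by simp
  also have "\<dots> = PiM J (\<lambda>p. distr (PiM K (\<lambda>_. N)) borel (\<lambda>X. X p))"
    by (intro PiM_cong) (auto simp: d1)
  finally show ?thesis
    using prob_space.indep_vars_iff_distr_eq_PiM'[OF ps J rv] by simp
qed

lemma sum_coords_std:
  fixes K J :: "'i set" and \<mu> :: real
  assumes K: "finite K" and JK: "J \<subseteq> K" and J: "J \<noteq> {}"
  shows "distributed (PiM K (\<lambda>_. density lborel (normal_density \<mu> 1))) lborel
     (\<lambda>X. ((\<Sum>p\<in>J. X p) - real (card J) * \<mu>) / sqrt (real (card J))) std_normal_density"
proof -
  define N where "N = density lborel (normal_density \<mu> 1)"
  have N: "prob_space N" unfolding N_def by (rule prob_space_normal_density) simp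
  have sN: "sets N = sets borel" unfolding N_def by simp
  have ps: "prob_space (PiM K (\<lambda>_. N))" by (rule prob_space_PiM) (simp add: N)
  have fJ: "finite J" using K JK finite_subset by blast
  have ind: "prob_space.indep_vars (PiM K (\<lambda>_. N)) (\<lambda>_. borel) (\<lambda>p X. X p) J"
    by (rule indep_coords[OF K JK J N sN])
  have dc: "distributed (PiM K (\<lambda>_. N)) lborel (\<lambda>X. X p) (normal_density \<mu> 1)" if "p \<in> J" for p
  proof -
    interpret P: product_prob_space "\<lambda>_. N" K
      by (simp add: N product_prob_space_def product_sigma_finite_def prob_space_imp_sigma_finite
        product_prob_space_axioms_def)
    have m: "(\<lambda>X::'i\<Rightarrow>real. X p) \<in> measurable (PiM K (\<lambda>_. N)) N"
      using that JK by (intro measurable_component_singleton) auto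
    have "distr (PiM K (\<lambda>_. N)) lborel (\<lambda>X. X p) = distr (PiM K (\<lambda>_. N)) N (\<lambda>X. X p)"
      unfolding distr_def using sN sets_eq_imp_space_eq[OF sN] by simp
    also have "\<dots> = N" using that JK by (intro P.PiM_component) auto
    finally show ?thesis unfolding distributed_def using m
      by (simp add: N_def measurable_cong_sets[OF refl sN[unfolded N_def]])
  qed
  have "distributed (PiM K (\<lambda>_. N)) lborel (\<lambda>x. \<Sum>i\<in>J. x i)
          (normal_density (\<Sum>i\<in>J. \<mu>) (sqrt (\<Sum>i\<in>J. 1\<^sup>2)))"
    by (rule prob_space.sum_indep_normal[OF ps fJ J ind, of "\<lambda>_. 1"]) (auto intro: dc)
  then have "distributed (PiM K (\<lambda>_. N)) lborel (\<lambda>x. \<Sum>i\<in>J. x i)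
          (normal_density (real (card J) * \<mu>) (sqrt (real (card J))))" by simp
  moreover have pos: "0 < sqrt (real (card J))" using fJ J by (simp add: card_gt_0_iff)
  ultimately show ?thesis
    using iffD1[OF prob_space.normal_standard_normal_convert[OF ps pos]] unfolding N_def by fast
qed

definition Gt :: "real \<Rightarrow> real" where
  "Gt c = measure (density lborel std_normal_density) {..<c}"

lemma Gt_nonneg: "0 \<le> Gt c" unfolding Gt_def by simp

lemma prob_lt:
  assumes "distributed M lborel Z std_normal_density"
  shows "measure M {x\<in>space M. Z x < c} = Gt c"
proof -
  have Zm: "Z \<in> measurable M lborel" using assms by (simp add: distributed_def)
  have "measure M {x\<in>space M. Z x < c} = measure M (Z -` {..<c} \<inter> space M)"
    by (intro arg_cong[where f="measure M"]) auto
  also have "\<dots> = measure (distr M lborel Z) {..<c}"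
    using Zm by (subst measure_distr) auto
  also have "\<dots> = Gt c" using assms by (simp add: distributed_def Gt_def)
  finally show ?thesis .
qed

lemma prob_gt:
  assumes "prob_space M" "distributed M lborel Z std_normal_density"
  shows "measure M {x\<in>space M. Z x > c} = Gt (- c)"
proof -
  have "distributed M lborel (\<lambda>x. 0 + (-1) * Z x) (normal_density (0 + (-1) * 0) (\<bar>-1\<bar> * 1))"
    by (rule prob_space.normal_density_affine[OF assms(1) assms(2)]) auto
  then have d: "distributed M lborel (\<lambda>x. - Z x) std_normal_density" by simp
  have "measure M {x\<in>space M. Z x > c} = measure M {x\<in>space M. - Z x < - c}"
    by (intro arg_cong[where f="measure M"]) auto
  also have "\<dots> = Gt (- c)" by (rule prob_lt[OF d])
  finally show ?thesis .
qed

lemma Gt_shift: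
  assumes a: "0 \<le> a" and d: "0 \<le> d"
  shows "Gt (- (a + d)) \<le> exp (- (a * d)) * Gt (- a)"
proof -
  let ?P = "density lborel std_normal_density"
  have ps: "prob_space ?P" by (rule prob_space_normal_density) simp
  have em: "emeasure ?P {..<c} = (\<integral>\<^sup>+ x. ennreal (std_normal_density x) * indicator {..<c} x \<partial>lborel)" for c
    by (subst emeasure_density) auto
  have "(\<integral>\<^sup>+ x. ennreal (std_normal_density x) * indicator {..<- (a + d)} x \<partial>lborel)
      = (\<integral>\<^sup>+ x. ennreal (std_normal_density (-d + 1 * x)) * indicator {..<- (a + d)} (-d + 1 * x) \<partial>lborel)"
    using nn_integral_real_affine[of "\<lambda>x. ennreal (std_normal_density x) * indicator {..<- (a + d)} x" 1 "-d"]
    by simp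
  also have "\<dots> = (\<integral>\<^sup>+ x. ennreal (std_normal_density (x - d)) * indicator {..<- a} x \<partial>lborel)"
    by (intro nn_integral_cong) (auto simp: indicator_def)
  also have "\<dots> \<le> (\<integral>\<^sup>+ x. ennreal (exp (- (a * d))) * (ennreal (std_normal_density x) * indicator {..<- a} x) \<partial>lborel)"
  proof (intro nn_integral_mono)
    fix x :: real
    show "ennreal (std_normal_density (x - d)) * indicator {..<- a} x
        \<le> ennreal (exp (- (a * d))) * (ennreal (std_normal_density x) * indicator {..<- a} x)"
    proof (cases "x < - a")
      case True
      have "std_normal_density (x - d) = exp (x * d - d\<^sup>2 / 2) * std_normal_density x"
        by (simp add: std_normal_density_def mult_exp_exp power2_eq_square algebra_simps add_divide_distrib[symmetric] diff_divide_distrib[symmetric])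
      also have "\<dots> \<le> exp (- (a * d)) * std_normal_density x"
      proof (intro mult_right_mono)
        have "x * d \<le> - a * d" using True d by (intro mult_right_mono) auto
        moreover have "0 \<le> d\<^sup>2 / 2" by simp
        ultimately show "exp (x * d - d\<^sup>2 / 2) \<le> exp (- (a * d))" by (subst exp_le_cancel_iff) linarith
      qed simp
      finally show ?thesis using True by (simp add: ennreal_mult[symmetric])
    qed simp
  qed
  also have "\<dots> = ennreal (exp (- (a * d))) * (\<integral>\<^sup>+ x. ennreal (std_normal_density x) * indicator {..<- a} x \<partial>lborel)"
    by (rule nn_integral_cmult) auto
  finally have "emeasure ?P {..<- (a + d)} \<le> ennreal (exp (- (a * d))) * emeasure ?P {..<- a}"
    by (simp add: em)
  then have "ennreal (Gt (- (a + d))) \<le> ennreal (exp (- (a * d)) * Gt (- a))"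
    unfolding Gt_def using ps
    by (simp add: finite_measure.emeasure_eq_measure[OF prob_space.finite_measure[OF ps]] ennreal_mult)
  then show ?thesis using Gt_nonneg by (simp add: ennreal_le_iff)
qed

lemma argmin0_iff: "argmin_act m f = 0 \<longleftrightarrow> (\<forall>k\<le>m. f 0 \<le> f k)"
proof
  assume "\<forall>k\<le>m. f 0 \<le> f k"
  then show "argmin_act m f = 0" unfolding argmin_act_def by (intro Least_eq_0) auto
next
  assume a: "argmin_act m f = 0"
  have "finite (f ` {..m})" "f ` {..m} \<noteq> {}" by auto
  then have "Min (f ` {..m}) \<in> f ` {..m}" by (rule Min_in)
  then obtain j where j: "j \<le> m" "f j = Min (f ` {..m})" by (metis atMost_iff imageE)
  have "j \<le> m \<and> (\<forall>k\<le>m. f j \<le> f k)" using j by auto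
  then have "(LEAST j. j \<le> m \<and> (\<forall>k\<le>m. f j \<le> f k)) \<le> m \<and>
     (\<forall>k\<le>m. f (LEAST j. j \<le> m \<and> (\<forall>k\<le>m. f j \<le> f k)) \<le> f k)" by (rule LeastI)
  then show "\<forall>k\<le>m. f 0 \<le> f k" using a unfolding argmin_act_def by simp
qed

lemma regret_eq: "1 \<le> m \<Longrightarrow> regret m s j = (if (s = StA) = (j = 0) then 0 else 1)"
proof -
  assume m: "1 \<le> m"
  have "Min (true_cost s ` {0..m}) = 0"
  proof (rule Min_eqI)
    show "0 \<in> true_cost s ` {0..m}"
    proof (cases s)
      case StA then show ?thesis by (intro rev_image_eqI[of 0]) (auto simp: true_cost_def)
    next
      case StAc then show ?thesis using m by (intro rev_image_eqI[of 1]) (auto simp: true_cost_def)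
    qed
  qed (auto simp: true_cost_def split: state.splits)
  then show ?thesis by (cases s) (auto simp: regret_def true_cost_def)
qed

lemma emp_mean_meas:
  "k \<le> m \<Longrightarrow> (\<lambda>X. emp_mean m s X k) \<in> borel_measurable (data_dist m s)"
proof (cases "k = 0")
  case False
  assume km: "k \<le> m"
  have "(\<lambda>X. X (k, i)) \<in> borel_measurable (data_dist m s)" if "i \<in> {1..m}" for i
  proof -
    have "(\<lambda>X. X (k, i)) \<in> measurable (data_dist m s) (density lborel (normal_density (gauss_mean s) 1))"
      unfolding data_dist_def using that km False by (intro measurable_component_singleton) auto
    then show ?thesis by (simp add: measurable_cong_sets[OF refl sets_density])
  qed
  then show ?thesis using False unfolding emp_mean_def by measurable
qed (simp add: emp_mean_def)

lemma int_regret: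
  assumes m: "1 \<le> m" and g: "\<And>k. k \<le> m \<Longrightarrow> (\<lambda>X. g X k) \<in> borel_measurable (data_dist m s)"
  shows "(\<integral>X. regret m s (argmin_act m (g X)) \<partial>data_dist m s) =
    measure (data_dist m s) {X \<in> space (data_dist m s). (s = StA) \<noteq> (\<forall>k\<le>m. g X 0 \<le> g X k)}"
    and "{X \<in> space (data_dist m s). (s = StA) \<noteq> (\<forall>k\<le>m. g X 0 \<le> g X k)} \<in> sets (data_dist m s)"
proof -
  let ?M = "data_dist m s"
  let ?E = "{X \<in> space ?M. (s = StA) \<noteq> (\<forall>k\<le>m. g X 0 \<le> g X k)}"
  have ps: "prob_space ?M" unfolding data_dist_def
    by (rule prob_space_PiM) (rule prob_space_normal_density, simp)
  have P: "{X \<in> space ?M. \<forall>k\<in>{..m}. g X 0 \<le> g X k} \<in> sets ?M"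
  proof (rule sets.sets_Collect_finite_All)
    fix k assume "k \<in> {..m}"
    then have [measurable]: "(\<lambda>X. g X k) \<in> borel_measurable ?M" "(\<lambda>X. g X 0) \<in> borel_measurable ?M"
      using g by auto
    show "{X \<in> space ?M. g X 0 \<le> g X k} \<in> sets ?M" by measurable
  qed simp
  have E: "?E \<in> sets ?M"
  proof (cases "s = StA")
    case True
    then have "?E = space ?M - {X \<in> space ?M. \<forall>k\<in>{..m}. g X 0 \<le> g X k}" by auto
    then show ?thesis using P by auto
  next
    case False
    then have "?E = {X \<in> space ?M. \<forall>k\<in>{..m}. g X 0 \<le> g X k}" by auto
    then show ?thesis using P by auto
  qed
  have "(\<integral>X. regret m s (argmin_act m (g X)) \<partial>?M) = (\<integral>X. indicator ?E X \<partial>?M)"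
  proof (intro Bochner_Integration.integral_cong refl)
    fix X assume X: "X \<in> space ?M"
    have "regret m s (argmin_act m (g X)) = (if (s = StA) = (argmin_act m (g X) = 0) then 0 else 1)"
      by (rule regret_eq[OF m])
    also have "\<dots> = (if (s = StA) = (\<forall>k\<le>m. g X 0 \<le> g X k) then 0 else 1)"
      by (simp only: argmin0_iff)
    also have "\<dots> = indicator ?E X" using X by (simp add: indicator_def)
    finally show "regret m s (argmin_act m (g X)) = indicator ?E X" .
  qed
  also have "\<dots> = measure ?M ?E"
  proof -
    have "(\<integral>X. indicator ?E X \<partial>?M) = measure ?M (?E \<inter> space ?M)"
      by (rule Bochner_Integration.integral_indicator)
    also have "?E \<inter> space ?M = ?E" by blast
    finally show ?thesis .
  qed
  finally show "(\<integral>X. regret m s (argmin_act m (g X)) \<partial>data_dist m s) =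
    measure (data_dist m s) {X \<in> space (data_dist m s). (s = StA) \<noteq> (\<forall>k\<le>m. g X 0 \<le> g X k)}" .
  show "{X \<in> space (data_dist m s). (s = StA) \<noteq> (\<forall>k\<le>m. g X 0 \<le> g X k)} \<in> sets (data_dist m s)"
    by (rule E)
qed

lemma ps_data: "prob_space (data_dist m s)"
  unfolding data_dist_def by (rule prob_space_PiM) (rule prob_space_normal_density, simp)

lemma sum_row:
  assumes j: "j \<in> {1..m}"
  shows "distributed (data_dist m s) lborel
     (\<lambda>X. ((\<Sum>i\<in>{1..m}. X (j, i)) - real m * gauss_mean s) / sqrt (real m)) std_normal_density"
proof -
  have m: "1 \<le> m" using j by auto
  have "distributed (data_dist m s) lborel
     (\<lambda>X. ((\<Sum>p\<in>{j}\<times>{1..m}. X p) - real (card ({j}\<times>{1..m})) * gauss_mean s) / sqrt (real (card ({j}\<times>{1..m})))) std_normal_density"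
    unfolding data_dist_def using j m by (intro sum_coords_std) auto
  moreover have "(\<Sum>p\<in>{j}\<times>{1..m}. X p) = (\<Sum>i\<in>{1..m}. X (j, i))" for X :: "nat \<times> nat \<Rightarrow> real"
  proof -
    have "(\<Sum>p\<in>{j}\<times>{1..m}. X p) = (\<Sum>(a,b)\<in>{j}\<times>{1..m}. X (a,b))" by (rule sum.cong) auto
    also have "\<dots> = (\<Sum>a\<in>{j}. \<Sum>b\<in>{1..m}. X (a,b))" by (rule sum.cartesian_product[symmetric])
    also have "\<dots> = (\<Sum>i\<in>{1..m}. X (j, i))" by (simp only: sum.insert_if sum.empty finite.emptyI) simp
    finally show ?thesis .
  qed
  moreover have "card ({j}\<times>{1..m}) = m" by (simp add: card_cartesian_product)
  ultimately show ?thesis by simp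
qed

lemma sum_two_rows:
  assumes m: "2 \<le> m"
  shows "distributed (data_dist m s) lborel
     (\<lambda>X. ((\<Sum>i\<in>{1..m}. X (1, i)) + (\<Sum>i\<in>{1..m}. X (2, i)) - real (2 * m) * gauss_mean s) / sqrt (real (2 * m))) std_normal_density"
proof -
  have "distributed (data_dist m s) lborel
     (\<lambda>X. ((\<Sum>p\<in>{1::nat,2}\<times>{1..m}. X p) - real (card ({1::nat,2}\<times>{1..m})) * gauss_mean s) / sqrt (real (card ({1::nat,2}\<times>{1..m})))) std_normal_density"
    unfolding data_dist_def using m by (intro sum_coords_std) auto
  moreover have "(\<Sum>p\<in>{1::nat,2}\<times>{1..m}. X p) = (\<Sum>i\<in>{1..m}. X (1, i)) + (\<Sum>i\<in>{1..m}. X (2, i))" for X :: "nat \<times> nat \<Rightarrow> real"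
  proof -
    have "(\<Sum>p\<in>{1::nat,2}\<times>{1..m}. X p) = (\<Sum>(a,b)\<in>{1::nat,2}\<times>{1..m}. X (a,b))" by (rule sum.cong) auto
    also have "\<dots> = (\<Sum>a\<in>{1::nat,2}. \<Sum>b\<in>{1..m}. X (a,b))" by (rule sum.cartesian_product[symmetric])
    also have "\<dots> = (\<Sum>i\<in>{1..m}. X (1, i)) + (\<Sum>i\<in>{1..m}. X (2, i))" by (subst sum.insert) auto
    finally show ?thesis .
  qed
  moreover have "card ({1::nat,2}\<times>{1..m}) = 2 * m" by (simp add: card_cartesian_product)
  ultimately show ?thesis by simp
qed

lemma bound_PCM_A:
  assumes m: "1 \<le> m"
  shows "Gt (- sqrt (real m)) \<le> (\<integral>X. regret m StA (sel_PCM m StA X) \<partial>data_dist m StA)"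
proof -
  let ?M = "data_dist m StA"
  let ?Z = "\<lambda>X. ((\<Sum>i\<in>{1..m}. X (1, i)) - real m * gauss_mean StA) / sqrt (real m)"
  note ir = int_regret[OF m, where s=StA and g="\<lambda>X. emp_mean m StA X", OF emp_mean_meas]
  have d: "distributed ?M lborel ?Z std_normal_density" using sum_row[of 1 m StA] m by simp
  have Zm: "?Z \<in> borel_measurable ?M" using d by (simp add: distributed_def)
  have sub: "{X \<in> space ?M. ?Z X < - sqrt (real m)} \<subseteq>
     {X \<in> space ?M. (StA = StA) \<noteq> (\<forall>k\<le>m. emp_mean m StA X 0 \<le> emp_mean m StA X k)}"
  proof safe
    fix X assume X: "X \<in> space ?M" and lt: "?Z X < - sqrt (real m)"
      and all: "\<forall>k\<le>m. emp_mean m StA X 0 \<le> emp_mean m StA X k"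
    have sq: "0 < sqrt (real m)" using m by simp
    have "(\<Sum>i\<in>{1..m}. X (1, i)) - real m < - sqrt (real m) * sqrt (real m)"
      using lt sq by (simp add: gauss_mean_def divide_less_eq)
    then have "(\<Sum>i\<in>{1..m}. X (1, i)) < 0" using m by simp
    then have "emp_mean m StA X 1 < emp_mean m StA X 0"
      using m by (simp add: emp_mean_def true_cost_def divide_neg_pos)
    then show False using all m by force
  qed
  have "Gt (- sqrt (real m)) = measure ?M {X \<in> space ?M. ?Z X < - sqrt (real m)}"
    by (rule prob_lt[OF d, symmetric])
  also have "\<dots> \<le> measure ?M {X \<in> space ?M. (StA = StA) \<noteq> (\<forall>k\<le>m. emp_mean m StA X 0 \<le> emp_mean m StA X k)}"
    by (rule finite_measure.finite_measure_mono[OF prob_space.finite_measure[OF ps_data] sub ir(2)])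
  also have "\<dots> = (\<integral>X. regret m StA (sel_PCM m StA X) \<partial>?M)"
    unfolding sel_PCM_def by (rule ir(1)[symmetric])
  finally show ?thesis .
qed

lemma m_sqrt_ln: "0 < m \<Longrightarrow> real m * sqrt (ln (real m) / real m) = sqrt (real m) * sqrt (ln (real m))"
proof -
  assume m: "0 < m"
  have "real m * sqrt (ln (real m) / real m) = (real m / sqrt (real m)) * sqrt (ln (real m))"
    by (simp add: real_sqrt_divide)
  also have "real m / sqrt (real m) = sqrt (real m)" by (rule real_div_sqrt) simp
  finally show ?thesis .
qed

lemma bound_UP_A:
  assumes m: "1 \<le> m" and lam: "0 \<le> lam"
  shows "(\<integral>X. regret m StA (sel_UP lam m StA X) \<partial>data_dist m StA)
     \<le> real m * Gt (- (sqrt (real m) + lam * sqrt (ln (real m))))"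
proof -
  let ?M = "data_dist m StA"
  let ?g = "\<lambda>X j. emp_mean m StA X j + lam * sqrt (sigma2 j * ln (real m) / real m)"
  let ?c = "- (sqrt (real m) + lam * sqrt (ln (real m)))"
  let ?Z = "\<lambda>j X. ((\<Sum>i\<in>{1..m}. X (j, i)) - real m * gauss_mean StA) / sqrt (real m)"
  let ?A = "\<lambda>j. {X \<in> space ?M. ?Z j X < ?c}"
  have gm: "(\<lambda>X. ?g X k) \<in> borel_measurable ?M" if "k \<le> m" for k
    using emp_mean_meas[OF that, of StA] by simp
  note ir = int_regret[OF m, where s=StA and g="?g", OF gm]
  have fm: "finite_measure ?M" by (rule prob_space.finite_measure[OF ps_data])
  have d: "distributed ?M lborel (?Z j) std_normal_density" if "j \<in> {1..m}" for j
    using sum_row[OF that, of StA] by simp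
  have As: "?A j \<in> sets ?M" if "j \<in> {1..m}" for j
  proof -
    have [measurable]: "?Z j \<in> borel_measurable ?M" using d[OF that] by (simp add: distributed_def)
    show ?thesis by measurable
  qed
  have sub: "{X \<in> space ?M. (StA = StA) \<noteq> (\<forall>k\<le>m. ?g X 0 \<le> ?g X k)} \<subseteq> (\<Union>j\<in>{1..m}. ?A j)"
  proof
    fix X assume XE: "X \<in> {X \<in> space ?M. (StA = StA) \<noteq> (\<forall>k\<le>m. ?g X 0 \<le> ?g X k)}"
    then have X: "X \<in> space ?M" and nall: "\<not> (\<forall>k\<le>m. ?g X 0 \<le> ?g X k)" by auto
    then obtain k where k: "k \<le> m" and lt: "?g X k < ?g X 0" by (auto simp: not_le)
    have g0: "?g X 0 = 0" by (simp add: emp_mean_def true_cost_def sigma2_def)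
    have k0: "k \<noteq> 0"
    proof
      assume "k = 0" with lt show False by simp
    qed
    have r: "0 < sqrt (real m)" using m by simp
    have "(\<Sum>i\<in>{1..m}. X (k, i)) / real m < - (lam * sqrt (ln (real m) / real m))"
      using lt g0 k0 by (simp add: emp_mean_def sigma2_def)
    then have "(\<Sum>i\<in>{1..m}. X (k, i)) < - (lam * (real m * sqrt (ln (real m) / real m)))"
      using m by (simp add: divide_less_eq algebra_simps)
    then have S: "(\<Sum>i\<in>{1..m}. X (k, i)) < - (lam * (sqrt (real m) * sqrt (ln (real m))))"
      using m by (simp add: m_sqrt_ln)
    have rr: "- (sqrt (real m) + lam * sqrt (ln (real m))) * sqrt (real m)
        = - real m - lam * (sqrt (real m) * sqrt (ln (real m)))"
      by (simp add: algebra_simps)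
    have "(\<Sum>i\<in>{1..m}. X (k, i)) - real m * gauss_mean StA < ?c * sqrt (real m)"
      using S unfolding rr by (simp add: gauss_mean_def)
    then have "?Z k X < ?c" by (simp only: pos_divide_less_eq[OF r])
    then have "X \<in> ?A k" using X by simp
    then show "X \<in> (\<Union>j\<in>{1..m}. ?A j)" using k k0 by auto
  qed
  have "(\<integral>X. regret m StA (sel_UP lam m StA X) \<partial>?M)
      = measure ?M {X \<in> space ?M. (StA = StA) \<noteq> (\<forall>k\<le>m. ?g X 0 \<le> ?g X k)}"
    unfolding sel_UP_def by (rule ir(1))
  also have "\<dots> \<le> measure ?M (\<Union>j\<in>{1..m}. ?A j)"
    by (rule finite_measure.finite_measure_mono[OF fm sub], rule sets.finite_UN, simp, erule As)
  also have "\<dots> \<le> (\<Sum>j\<in>{1..m}. measure ?M (?A j))"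
    by (rule finite_measure.finite_measure_subadditive_finite[OF fm], simp, intro image_subsetI, erule As)
  also have "\<dots> = (\<Sum>j\<in>{1..m}. Gt ?c)"
    by (rule sum.cong[OF refl]) (rule prob_lt[OF d])
  also have "\<dots> = real m * Gt ?c" by simp
  finally show ?thesis .
qed

lemma bound_UP_Ac:
  assumes m: "2 \<le> m" and lam: "0 \<le> lam"
  shows "(\<integral>X. regret m StAc (sel_UP lam m StAc X) \<partial>data_dist m StAc)
     \<le> Gt (- (sqrt (2 * real m) - sqrt 2 * lam * sqrt (ln (real m)) - 1))"
proof -
  let ?M = "data_dist m StAc"
  let ?g = "\<lambda>X j. emp_mean m StAc X j + lam * sqrt (sigma2 j * ln (real m) / real m)"
  let ?u = "sqrt (2 * real m) - sqrt 2 * lam * sqrt (ln (real m))"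
  let ?W = "\<lambda>X. ((\<Sum>i\<in>{1..m}. X (1, i)) + (\<Sum>i\<in>{1..m}. X (2, i)) - real (2 * m) * gauss_mean StAc) / sqrt (real (2 * m))"
  have m1: "1 \<le> m" using m by simp
  have gm: "(\<lambda>X. ?g X k) \<in> borel_measurable ?M" if "k \<le> m" for k
    using emp_mean_meas[OF that, of StAc] by simp
  note ir = int_regret[OF m1, where s=StAc and g="?g", OF gm]
  have fm: "finite_measure ?M" by (rule prob_space.finite_measure[OF ps_data])
  have d: "distributed ?M lborel ?W std_normal_density"
    using sum_two_rows[OF m, of StAc] by simp
  have Ws: "{X \<in> space ?M. ?W X > ?u - 1} \<in> sets ?M"
  proof -
    have [measurable]: "?W \<in> borel_measurable ?M" using d by (simp add: distributed_def)
    show ?thesis by measurable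
  qed
  have sub: "{X \<in> space ?M. (StAc = StA) \<noteq> (\<forall>k\<le>m. ?g X 0 \<le> ?g X k)} \<subseteq> {X \<in> space ?M. ?W X > ?u - 1}"
  proof
    fix X assume XE: "X \<in> {X \<in> space ?M. (StAc = StA) \<noteq> (\<forall>k\<le>m. ?g X 0 \<le> ?g X k)}"
    then have X: "X \<in> space ?M" and all: "\<forall>k\<le>m. ?g X 0 \<le> ?g X k" by auto
    have g0: "?g X 0 = 1" by (simp add: emp_mean_def true_cost_def sigma2_def)
    have "1 \<le> ?g X 1" "1 \<le> ?g X 2" using all g0 m by auto
    then have "1 \<le> (\<Sum>i\<in>{1..m}. X (1, i)) / real m + lam * sqrt (ln (real m) / real m)"
      "1 \<le> (\<Sum>i\<in>{1..m}. X (2, i)) / real m + lam * sqrt (ln (real m) / real m)"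
      by (simp_all add: emp_mean_def sigma2_def)
    then have "real m \<le> (\<Sum>i\<in>{1..m}. X (1, i)) + lam * (real m * sqrt (ln (real m) / real m))"
      "real m \<le> (\<Sum>i\<in>{1..m}. X (2, i)) + lam * (real m * sqrt (ln (real m) / real m))"
      using m by (simp_all add: le_divide_eq field_simps)
    then have S: "2 * real m - 2 * lam * (sqrt (real m) * sqrt (ln (real m))) \<le>
        (\<Sum>i\<in>{1..m}. X (1, i)) + (\<Sum>i\<in>{1..m}. X (2, i))"
      using m by (simp add: m_sqrt_ln)
    have r2: "0 < sqrt (2 * real m)" using m by simp
    have e1: "sqrt (2 * real m) * sqrt (2 * real m) = 2 * real m" by simp
    have e2: "sqrt 2 * sqrt (2 * real m) = 2 * sqrt (real m)"
      by (simp add: real_sqrt_mult)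
    have "?u * sqrt (2 * real m) = 2 * real m - 2 * lam * (sqrt (real m) * sqrt (ln (real m)))"
      using e1 e2 by (simp add: algebra_simps)
    then have "?u * sqrt (2 * real m) \<le> (\<Sum>i\<in>{1..m}. X (1, i)) + (\<Sum>i\<in>{1..m}. X (2, i))"
      using S by simp
    then have "?u \<le> ?W X" using r2 by (simp add: gauss_mean_def le_divide_eq)
    then show "X \<in> {X \<in> space ?M. ?W X > ?u - 1}" using X by simp
  qed
  have "(\<integral>X. regret m StAc (sel_UP lam m StAc X) \<partial>?M)
      = measure ?M {X \<in> space ?M. (StAc = StA) \<noteq> (\<forall>k\<le>m. ?g X 0 \<le> ?g X k)}"
    unfolding sel_UP_def by (rule ir(1))
  also have "\<dots> \<le> measure ?M {X \<in> space ?M. ?W X > ?u - 1}"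
    by (rule finite_measure.finite_measure_mono[OF fm sub Ws])
  also have "\<dots> = Gt (- (?u - 1))" by (rule prob_gt[OF ps_data d])
  finally show ?thesis by simp
qed

lemma int_regret_nonneg: "1 \<le> m \<Longrightarrow> 0 \<le> (\<integral>X. regret m s (f X) \<partial>M)"
  by (intro integral_nonneg_AE AE_I2) (simp add: regret_eq)

lemma ratio_bound:
  assumes m: "2 \<le> m" and lam: "1 \<le> lam"
    and d: "0 \<le> sqrt (2 * real m) - sqrt 2 * lam * sqrt (ln (real m)) - 1 - sqrt (real m)"
  shows "0 \<le> ER_UP lam m / ER_PCM m"
    and "ER_UP lam m / ER_PCM m \<le> real m * exp (- (sqrt (real m) * sqrt (ln (real m))))
          + exp (- (sqrt (real m) * (sqrt (2 * real m) - sqrt 2 * lam * sqrt (ln (real m)) - 1 - sqrt (real m))))"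
proof -
  define a where "a = sqrt (real m)"
  define dd where "dd = sqrt (2 * real m) - sqrt 2 * lam * sqrt (ln (real m)) - 1 - sqrt (real m)"
  define G where "G = Gt (- a)"
  define B where "B = real m * exp (- (a * sqrt (ln (real m)))) + exp (- (a * dd))"
  have m1: "1 \<le> m" using m by simp
  have a0: "0 \<le> a" unfolding a_def by simp
  have L0: "0 \<le> sqrt (ln (real m))" using m by simp
  have b0: "0 \<le> lam * sqrt (ln (real m))" using lam L0 by simp
  have G0: "0 \<le> G" unfolding G_def by (rule Gt_nonneg)
  have B0: "0 \<le> B" unfolding B_def by simp
  define IA where "IA = (\<integral>X. regret m StA (sel_PCM m StA X) \<partial>data_dist m StA)"
  define IAc where "IAc = (\<integral>X. regret m StAc (sel_PCM m StAc X) \<partial>data_dist m StAc)"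
  define JA where "JA = (\<integral>X. regret m StA (sel_UP lam m StA X) \<partial>data_dist m StA)"
  define JAc where "JAc = (\<integral>X. regret m StAc (sel_UP lam m StAc X) \<partial>data_dist m StAc)"
  have PCM: "ER_PCM m = IA / 2 + IAc / 2"
    unfolding ER_PCM_def exp_regret_def IA_def IAc_def by simp
  have UP: "ER_UP lam m = JA / 2 + JAc / 2"
    unfolding ER_UP_def exp_regret_def JA_def JAc_def by simp
  have IA: "G \<le> IA" unfolding IA_def G_def a_def by (rule bound_PCM_A[OF m1])
  have IAc: "0 \<le> IAc" unfolding IAc_def by (rule int_regret_nonneg[OF m1])
  have JA0: "0 \<le> JA" unfolding JA_def by (rule int_regret_nonneg[OF m1])
  have JAc0: "0 \<le> JAc" unfolding JAc_def by (rule int_regret_nonneg[OF m1])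
  have "JA \<le> real m * Gt (- (a + lam * sqrt (ln (real m))))"
    unfolding JA_def a_def using lam by (intro bound_UP_A[OF m1]) simp
  also have "\<dots> \<le> real m * (exp (- (a * (lam * sqrt (ln (real m))))) * G)"
    unfolding G_def by (intro mult_left_mono Gt_shift a0 b0) simp
  also have "\<dots> \<le> real m * (exp (- (a * sqrt (ln (real m)))) * G)"
  proof -
    have "a * sqrt (ln (real m)) \<le> a * (lam * sqrt (ln (real m)))"
      using a0 L0 lam by (intro mult_left_mono) (auto intro: mult_right_mono[of 1 lam, simplified])
    then show ?thesis using G0 by (intro mult_left_mono mult_right_mono) auto
  qed
  finally have JA: "JA \<le> real m * exp (- (a * sqrt (ln (real m)))) * G" by simp
  have "JAc \<le> Gt (- (sqrt (2 * real m) - sqrt 2 * lam * sqrt (ln (real m)) - 1))"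
    unfolding JAc_def using lam by (intro bound_UP_Ac[OF m]) simp
  also have "\<dots> = Gt (- (a + dd))" unfolding a_def dd_def by (rule arg_cong[where f=Gt]) simp
  also have "\<dots> \<le> exp (- (a * dd)) * G" unfolding G_def
    by (intro Gt_shift a0) (use d in \<open>simp add: dd_def\<close>)
  finally have JAc: "JAc \<le> exp (- (a * dd)) * G" .
  have UPb: "ER_UP lam m \<le> B * G / 2" unfolding UP B_def using JA JAc by (simp add: algebra_simps)
  have UP0: "0 \<le> ER_UP lam m" unfolding UP using JA0 JAc0 by simp
  have PCMb: "G / 2 \<le> ER_PCM m" unfolding PCM using IA IAc by simp
  show "0 \<le> ER_UP lam m / ER_PCM m" using UP0 PCMb G0 by simp
  have "ER_UP lam m / ER_PCM m \<le> B"
  proof (cases "G = 0")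
    case True
    then have "ER_UP lam m = 0" using UPb UP0 by simp
    then show ?thesis using B0 by simp
  next
    case False
    then have Gp: "0 < G" using G0 by simp
    have "ER_UP lam m / ER_PCM m \<le> ER_UP lam m / (G / 2)"
      using UP0 PCMb Gp by (intro divide_left_mono) auto
    also have "\<dots> \<le> (B * G / 2) / (G / 2)"
      using UPb Gp by (intro divide_right_mono) auto
    also have "\<dots> = B" using Gp by simp
    finally show ?thesis .
  qed
  then show "ER_UP lam m / ER_PCM m \<le> real m * exp (- (sqrt (real m) * sqrt (ln (real m))))
          + exp (- (sqrt (real m) * (sqrt (2 * real m) - sqrt 2 * lam * sqrt (ln (real m)) - 1 - sqrt (real m))))"
    unfolding B_def a_def dd_def .
qed

lemma asymp1: "((\<lambda>m::nat. real m * exp (- (sqrt (real m) * sqrt (ln (real m))))) \<longlongrightarrow> 0) sequentially"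
  by real_asymp

lemma asymp2: "((\<lambda>m::nat. exp (- (sqrt (real m) * (sqrt (2 * real m) - sqrt 2 * lam * sqrt (ln (real m)) - 1 - sqrt (real m))))) \<longlongrightarrow> 0) sequentially"
  by real_asymp

lemma asymp3: "eventually (\<lambda>m::nat. 0 \<le> sqrt (2 * real m) - sqrt 2 * lam * sqrt (ln (real m)) - 1 - sqrt (real m)) sequentially"
  by real_asymp

theorem mainTheorem5:
  fixes lam :: real
  assumes "lam \<ge> sqrt 2"
  shows "((\<lambda>m::nat. ER_UP lam m / ER_PCM m) \<longlongrightarrow> 0) sequentially"
proof -
  have "1 \<le> sqrt (2::real)" by simp
  then have lam: "1 \<le> lam" using assms by linarith
  have ev: "eventually (\<lambda>m::nat. 2 \<le> m \<and> 0 \<le> sqrt (2 * real m) - sqrt 2 * lam * sqrt (ln (real m)) - 1 - sqrt (real m)) sequentially"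
    by (intro eventually_conj eventually_ge_at_top asymp3)
  show ?thesis
  proof (rule tendsto_sandwich[OF _ _ tendsto_const tendsto_add_zero[OF asymp1 asymp2[of lam]]])
    show "eventually (\<lambda>m. (0::real) \<le> ER_UP lam m / ER_PCM m) sequentially"
      using ev by eventually_elim (use ratio_bound[OF _ lam] in blast)
    show "eventually (\<lambda>m. ER_UP lam m / ER_PCM m \<le> real m * exp (- (sqrt (real m) * sqrt (ln (real m))))
          + exp (- (sqrt (real m) * (sqrt (2 * real m) - sqrt 2 * lam * sqrt (ln (real m)) - 1 - sqrt (real m))))) sequentially"
      using ev by eventually_elim (use ratio_bound[OF _ lam] in blast)
  qed
qed

end
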